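(* Let $x,\theta^\star,\check\theta\in\mathbb R^d$ with $\|x\|\le1$, let $\underline V\in\mathbb R^{d\times d}$ be symmetric positive definite with $\underline V\succ\alpha m I_d$ for some $\alpha>0$ and integer $m\ge1$, let $\beta>0$, and let $\eta$ be a mean-zero random vector in $\mathbb R^d$ with $0<\mathbb E\|\eta\|^2<\infty$. Set $\tilde\theta=\check\theta+\beta\underline V^{-1/2}\eta$ and $$\pi=\max[\pi_{\min},\min\{\pi_{\max},\Pr(x^\top\tilde\theta<0)\}],$$ with $0<\pi_{\min}<\pi_{\max}<1$. Let $\pi^\star=\pi_{\min}$ if $x^\top\theta^\star>0$, $\pi^\star=\pi_{\max}$ if $x^\top\theta^\star<0$, and $\pi^\star\in[\pi_{\min},\pi_{\max}]$ arbitrary if $x^\top\theta^\star=0$. Then $(\pi-\pi^\star)x^\top\theta^\star\ge0$ and $$(\pi-\pi^\star)x^\top\theta^\star<\sqrt{\frac{\|\check\theta-\theta^\star\|^2_{\underline V}+\beta^2\mathbb E\|\eta\|^2}{\min(\pi_{\min},1-\pi_{\max})\,\alpha m}}.$$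
   Context: In the paper this is applied conditionally on all information up to and including the context at decision point $(i,t)$, with $x=x_{i,t}$, $\theta^\star=\theta^\star_{i,t}$, $\check\theta=\check\theta_{i,t}$, $\underline V=\underline V_{i,t}$, $m=\min(i,t)$, $\beta=\beta_{i,t}$, and $\pi,\pi^\star$ the algorithm's and the optimal policy's probabilities of the control action. $\|y\|_A=\sqrt{y^\top Ay}$; $\Pr$ is over $\eta$ only. *)

theory Defs
  imports "HOL-Analysis.Analysis" "HOL-Probability.Probability"
begin

definition sym_mat :: "real^'n^'n \<Rightarrow> bool" where
  "sym_mat A \<longleftrightarrow> transpose A = A"

definition pos_def_mat :: "real^'n^'n \<Rightarrow> bool" where
  "pos_def_mat A \<longleftrightarrow> sym_mat A \<and> (\<forall>y. y \<noteq> 0 \<longrightarrow> y \<bullet> (A *v y) > 0)"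

definition loewner_gt :: "real^'n^'n \<Rightarrow> real^'n^'n \<Rightarrow> bool" where
  "loewner_gt A B \<longleftrightarrow> pos_def_mat (A - B)"

definition inv_sqrt_mat :: "real^'n^'n \<Rightarrow> real^'n^'n" where
  "inv_sqrt_mat V = (THE S. pos_def_mat S \<and> S ** S = matrix_inv V)"

definition wnorm_sq :: "real^'n^'n \<Rightarrow> real^'n \<Rightarrow> real" where
  "wnorm_sq A y = y \<bullet> (A *v y)"

end

theory Submission
  imports Defs
begin


lemma sym_dot:
  fixes A :: "real^'n^'n"
  assumes "transpose A = A"
  shows "y \<bullet> (A *v z) = (A *v y) \<bullet> z"
proof -
  have "y \<bullet> (A *v z) = (y v* A) \<bullet> z" by (simp add: dot_lmul_matrix)
  also have "y v* A = A *v y" using vector_transpose_matrix[of y A] assms by simp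
  finally show ?thesis .
qed

lemma lin_quad_zero:
  fixes a b :: real
  assumes "\<And>t. a * t + b * t\<^sup>2 \<le> 0"
  shows "a = 0"
proof (rule ccontr)
  assume a: "a \<noteq> 0"
  define s where "s = 1 / (\<bar>b\<bar> + 1)"
  have s: "s > 0" "\<bar>b\<bar> * s < 1" unfolding s_def by (auto simp: field_simps)
  have "a * (s*a) + b * (s*a)\<^sup>2 \<le> 0" by (rule assms)
  hence "a\<^sup>2 * (s * (1 + b * s)) \<le> 0" by (simp add: power2_eq_square algebra_simps)
  moreover have "a\<^sup>2 > 0" using a by simp
  moreover have "1 + b * s > 0" using s abs_le_iff[of b] 
    by (smt (verit, ccfv_SIG) mult_minus_left mult_right_mono)
  ultimately show False using s by (smt (verit) mult_pos_pos)
qed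

lemma eigen_exists:
  fixes A :: "real^'n^'n" and W :: "(real^'n) set"
  assumes sym: "transpose A = A" and W: "subspace W" "W \<noteq> {0}"
    and inv: "\<And>w. w \<in> W \<Longrightarrow> A *v w \<in> W"
  shows "\<exists>u\<in>W. norm u = 1 \<and> (\<exists>l. A *v u = l *\<^sub>R u)"
proof -
  define K where "K = W \<inter> sphere 0 1"
  have "closed W" using W(1) by (simp add: closed_subspace)
  hence cK: "compact K" unfolding K_def by (simp add: closed_Int_compact)
  obtain w0 where w0: "w0 \<in> W" "w0 \<noteq> 0" using W subspace_0 by blast
  have "w0 /\<^sub>R norm w0 \<in> K" using w0 W(1) unfolding K_def by (auto simp: subspace_scale)
  hence "K \<noteq> {}" by auto
  moreover have "continuous_on K (\<lambda>y. y \<bullet> (A *v y))"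
    by (intro continuous_intros)
  ultimately obtain u where uK: "u \<in> K" and umax: "\<And>y. y \<in> K \<Longrightarrow> y \<bullet> (A *v y) \<le> u \<bullet> (A *v u)"
    using continuous_attains_sup[OF cK] by blast
  define l where "l = u \<bullet> (A *v u)"
  have uW: "u \<in> W" and nu: "norm u = 1" using uK unfolding K_def by auto
  have uu: "u \<bullet> u = 1" using nu by (simp add: dot_square_norm)
  have key: "y \<bullet> (A *v y) \<le> l * (y \<bullet> y)" if "y \<in> W" for y
  proof (cases "y = 0")
    case True thus ?thesis by simp
  next
    case False
    have "y /\<^sub>R norm y \<in> K" using False that W(1) unfolding K_def by (auto simp: subspace_scale)
    hence "(y /\<^sub>R norm y) \<bullet> (A *v (y /\<^sub>R norm y)) \<le> l" using umax l_def by blast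
    hence "(y \<bullet> (A *v y)) / (norm y)\<^sup>2 \<le> l"
      by (simp add: matrix_vector_mult_scaleR power2_eq_square divide_inverse mult_ac)
    moreover have "(norm y)\<^sup>2 > 0" using False by simp
    ultimately show ?thesis by (simp add: dot_square_norm divide_le_eq)
  qed
  have orth: "(A *v u - l *\<^sub>R u) \<bullet> w = 0" if w: "w \<in> W" for w
  proof -
    have "(2 * (w \<bullet> (A *v u)) - 2 * l * (u \<bullet> w)) * t + (w \<bullet> (A *v w) - l * (w \<bullet> w)) * t\<^sup>2 \<le> 0" for t
    proof -
      have "u + t *\<^sub>R w \<in> W" using W(1) uW w by (simp add: subspace_add subspace_scale)
      from key[OF this]
      have "(u + t *\<^sub>R w) \<bullet> (A *v (u + t *\<^sub>R w)) \<le> l * ((u + t *\<^sub>R w) \<bullet> (u + t *\<^sub>R w))" .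
      moreover have "u \<bullet> (A *v w) = w \<bullet> (A *v u)" using sym_dot[OF sym, of u w] by (simp add: inner_commute)
      ultimately show ?thesis
        by (simp add: matrix_vector_right_distrib matrix_vector_mult_scaleR inner_add_left inner_add_right
            uu l_def[symmetric] algebra_simps power2_eq_square inner_commute)
    qed
    hence "2 * (w \<bullet> (A *v u)) - 2 * l * (u \<bullet> w) = 0" by (rule lin_quad_zero)
    thus ?thesis by (simp add: inner_diff_left inner_diff_right inner_commute)
  qed
  have "A *v u - l *\<^sub>R u \<in> W" using inv[OF uW] uW W(1) by (simp add: subspace_diff subspace_scale)
  from orth[OF this] have "A *v u = l *\<^sub>R u" by simp
  thus ?thesis using uW nu by blast
qed

lemma eigen_basis:
  fixes A :: "real^'n^'n"
  assumes sym: "transpose A = A"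
  shows "subspace W \<Longrightarrow> (\<And>w. w \<in> W \<Longrightarrow> A *v w \<in> W) \<Longrightarrow>
    \<exists>B. B \<subseteq> W \<and> finite B \<and> pairwise orthogonal B \<and>
        (\<forall>u\<in>B. norm u = 1 \<and> (\<exists>l. A *v u = l *\<^sub>R u)) \<and> span B = W"
proof (induction "dim W" arbitrary: W rule: less_induct)
  case less
  show ?case
  proof (cases "W = {0}")
    case True
    thus ?thesis by (intro exI[of _ "{}"]) auto
  next
    case False
    obtain u l where uW: "u \<in> W" and nu: "norm u = 1" and ul: "A *v u = l *\<^sub>R u"
      using eigen_exists[OF sym less.prems(1) False less.prems(2)] by blast
    have uu: "u \<bullet> u = 1" using nu by (simp add: dot_square_norm)
    define W' where "W' = {w \<in> W. u \<bullet> w = 0}"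
    have sW': "subspace W'" using less.prems(1) unfolding W'_def subspace_def
      by (auto simp: inner_add_right)
    have iW': "A *v w \<in> W'" if "w \<in> W'" for w
    proof -
      have "u \<bullet> (A *v w) = (A *v u) \<bullet> w" by (rule sym_dot[OF sym])
      also have "\<dots> = 0" using that ul unfolding W'_def by simp
      finally show ?thesis using that less.prems(2) unfolding W'_def by auto
    qed
    have "W' \<subset> W" using uW uu unfolding W'_def by force
    moreover have "span W' = W'" "span W = W" using sW' less.prems(1) by (simp_all add: span_eq_iff)
    ultimately have "span W' \<subset> span W" by (metis span_eq_iff)
    hence "dim W' < dim W" by (rule dim_psubset)
    from less.hyps[OF this sW' iW'] obtain B' where B': "B' \<subseteq> W'" "finite B'" "pairwise orthogonal B'"
      "\<forall>u\<in>B'. norm u = 1 \<and> (\<exists>l. A *v u = l *\<^sub>R u)" "span B' = W'" by blast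
    show ?thesis
    proof (intro exI[of _ "insert u B'"] conjI)
      show "insert u B' \<subseteq> W" using uW B'(1) unfolding W'_def by auto
      show "finite (insert u B')" using B'(2) by simp
      show "pairwise orthogonal (insert u B')"
        using B'(1,3) unfolding W'_def pairwise_def orthogonal_def by (auto simp: inner_commute)
      show "\<forall>v\<in>insert u B'. norm v = 1 \<and> (\<exists>l. A *v v = l *\<^sub>R v)" using B'(4) nu ul by auto
      show "span (insert u B') = W"
      proof
        show "span (insert u B') \<subseteq> W"
          using \<open>insert u B' \<subseteq> W\<close> less.prems(1) by (simp add: span_minimal)
        show "W \<subseteq> span (insert u B')"
        proof
          fix w assume w: "w \<in> W"
          have "w - (u \<bullet> w) *\<^sub>R u \<in> W'" unfolding W'_def
            using w uW less.prems(1) uu by (auto simp: subspace_diff subspace_scale inner_diff_right)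
          hence "w - (u \<bullet> w) *\<^sub>R u \<in> span (insert u B')" using B'(5) by (metis span_mono subset_insertI subsetD)
          moreover have "(u \<bullet> w) *\<^sub>R u \<in> span (insert u B')" by (simp add: span_base span_scale)
          ultimately have "w - (u \<bullet> w) *\<^sub>R u + (u \<bullet> w) *\<^sub>R u \<in> span (insert u B')" by (rule span_add)
          thus "w \<in> span (insert u B')" by simp
        qed
      qed
    qed
  qed
qed

locale onb =
  fixes B :: "(real^'n) set"
  assumes fin: "finite B" and orth: "pairwise orthogonal B"
    and nrm: "\<And>u. u \<in> B \<Longrightarrow> norm u = 1" and spn: "span B = UNIV"
begin

lemma dotB: "u \<in> B \<Longrightarrow> v \<in> B \<Longrightarrow> u \<bullet> v = (if u = v then 1 else 0)"
  using orth nrm unfolding pairwise_def orthogonal_def by (auto simp: dot_square_norm)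

lemma coef: "v \<in> B \<Longrightarrow> v \<bullet> (\<Sum>u\<in>B. c u *\<^sub>R u) = c v"
proof -
  assume v: "v \<in> B"
  have "v \<bullet> (\<Sum>u\<in>B. c u *\<^sub>R u) = (\<Sum>u\<in>B. if u = v then c u else 0)"
    unfolding inner_sum_right by (rule sum.cong) (auto simp: dotB[OF v])
  also have "\<dots> = c v" using v fin by (simp add: sum.delta')
  finally show ?thesis .
qed

lemma expand: "y = (\<Sum>u\<in>B. (u \<bullet> y) *\<^sub>R u)"
proof -
  define r where "r = y - (\<Sum>u\<in>B. (u \<bullet> y) *\<^sub>R u)"
  have "orthogonal r v" if "v \<in> B" for v
    using coef[OF that, of "\<lambda>u. u \<bullet> y"] that
    unfolding r_def orthogonal_def by (simp add: inner_diff_right inner_commute)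
  hence "orthogonal r r" using spn by (metis UNIV_I orthogonal_to_span)
  hence "r = 0" by (simp add: orthogonal_def)
  thus ?thesis unfolding r_def by simp
qed

definition F :: "(real^'n \<Rightarrow> real) \<Rightarrow> real^'n \<Rightarrow> real^'n" where
  "F h y = (\<Sum>u\<in>B. (h u * (u \<bullet> y)) *\<^sub>R u)"

lemma F_lin: "linear (F h)"
  by (rule linearI) (simp_all add: F_def inner_add_right distrib_left scaleR_add_left sum.distrib
      scaleR_sum_right algebra_simps)

lemma F_coef: "v \<in> B \<Longrightarrow> v \<bullet> F h y = h v * (v \<bullet> y)"
  unfolding F_def by (rule coef)

lemma F_F: "F h (F k y) = F (\<lambda>u. h u * k u) y"
  unfolding F_def[of h] by (simp add: F_coef F_def[of "\<lambda>u. h u * k u"] mult.assoc cong: sum.cong)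

lemma F_cong: "(\<And>u. u \<in> B \<Longrightarrow> h u = k u) \<Longrightarrow> F h y = F k y"
  unfolding F_def by (auto intro!: sum.cong)

lemma F_one: "F (\<lambda>u. 1) y = y"
  unfolding F_def by (simp add: expand[symmetric])

lemma F_eig: assumes "\<And>u. u \<in> B \<Longrightarrow> A *v u = lam u *\<^sub>R u"
  shows "A *v y = F lam y"
proof -
  have "A *v y = A *v (\<Sum>u\<in>B. (u \<bullet> y) *\<^sub>R u)" using expand by simp
  also have "\<dots> = (\<Sum>u\<in>B. (u \<bullet> y) *\<^sub>R (A *v u))"
    by (simp add: matrix_vector_mult_scaleR vec.sum)
  also have "\<dots> = F lam y" unfolding F_def using assms by (auto intro!: sum.cong simp: mult.commute)
  finally show ?thesis .
qed

lemma F_quad: "y \<bullet> F h y = (\<Sum>u\<in>B. h u * (u \<bullet> y)\<^sup>2)"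
  unfolding F_def by (simp add: inner_sum_right power2_eq_square inner_commute mult.assoc)

lemma F_sym: "y \<bullet> F h z = F h y \<bullet> z"
  unfolding F_def by (simp add: inner_sum_right inner_sum_left inner_commute mult_ac)

end

lemma pd_sym: "pos_def_mat S \<Longrightarrow> transpose S = S"
  by (simp add: pos_def_mat_def sym_mat_def)

lemma pd_nonneg: "pos_def_mat S \<Longrightarrow> 0 \<le> y \<bullet> (S *v y)"
  unfolding pos_def_mat_def by (cases "y = 0") (auto intro: less_imp_le)

lemma mat_of_F: "onb B \<Longrightarrow> matrix (onb.F B h) *v y = onb.F B h y"
  using matrix_vector_mul(2)[OF onb.F_lin] by metis

lemma inv_sqrt_exists:
  fixes V :: "real^'n^'n"
  assumes pd: "pos_def_mat V"
  shows "\<exists>S T. pos_def_mat S \<and> S ** S = T \<and> V ** T = mat 1"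
proof -
  have sym: "transpose V = V" using pd_sym[OF pd] .
  obtain B where B: "finite B" "pairwise orthogonal B"
      "\<forall>u\<in>B. norm u = 1 \<and> (\<exists>l. V *v u = l *\<^sub>R u)" "span B = UNIV"
    using eigen_basis[OF sym, of UNIV] by auto
  interpret onb B using B by unfold_locales auto
  define lam where "lam u = u \<bullet> (V *v u)" for u
  have eig: "V *v u = lam u *\<^sub>R u" if uB: "u \<in> B" for u
  proof -
    obtain l where l: "V *v u = l *\<^sub>R u" using B(3) uB by auto
    have "u \<bullet> u = 1" using nrm[OF uB] by (simp add: dot_square_norm)
    hence "lam u = l" unfolding lam_def l by simp
    thus ?thesis using l by simp
  qed
  have lpos: "lam u > 0" if "u \<in> B" for u
  proof -
    have "u \<noteq> 0" using nrm[OF that] by auto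
    thus ?thesis using pd unfolding pos_def_mat_def lam_def by auto
  qed
  define h where "h u = 1 / sqrt (lam u)" for u
  define k where "k u = 1 / lam u" for u
  define S where "S = matrix (F h)"
  define T where "T = matrix (F k)"
  have onbB: "onb B" by unfold_locales
  have Sv: "S *v y = F h y" for y unfolding S_def by (rule mat_of_F[OF onbB])
  have Tv: "T *v y = F k y" for y unfolding T_def by (rule mat_of_F[OF onbB])
  have "S ** S = T"
    unfolding matrix_eq
  proof
    fix y
    have "(S ** S) *v y = F h (F h y)" by (simp add: matrix_vector_mul_assoc[symmetric] Sv)
    also have "\<dots> = F k y" unfolding F_F
      by (rule F_cong) (auto simp: h_def k_def lpos real_sqrt_mult[symmetric] less_imp_le)
    finally show "(S ** S) *v y = T *v y" by (simp add: Tv)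
  qed
  moreover have "V ** T = mat 1"
    unfolding matrix_eq
  proof
    fix y
    have "(V ** T) *v y = F lam (F k y)" by (simp add: matrix_vector_mul_assoc[symmetric] Tv F_eig[OF eig])
    also have "\<dots> = F (\<lambda>u. 1) y" unfolding F_F
      by (rule F_cong) (use lpos in \<open>fastforce simp: k_def\<close>)
    finally show "(V ** T) *v y = mat 1 *v y" by (simp add: F_one)
  qed
  moreover have "pos_def_mat S"
    unfolding pos_def_mat_def sym_mat_def
  proof
    show "transpose S = S" unfolding matrix_eq
    proof
      fix y
      have "z \<bullet> (transpose S *v y - S *v y) = 0" for z
      proof -
        have "z \<bullet> (transpose S *v y) = (y v* S) \<bullet> z" by (simp add: inner_commute)
        also have "\<dots> = y \<bullet> F h z" by (simp add: dot_lmul_matrix Sv)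
        also have "\<dots> = F h y \<bullet> z" by (rule F_sym)
        also have "\<dots> = z \<bullet> (S *v y)" unfolding Sv by (rule inner_commute)
        finally show ?thesis by (simp add: inner_diff_right)
      qed
      from this[of "transpose S *v y - S *v y"] show "transpose S *v y = S *v y" by simp
    qed
    show "\<forall>y. y \<noteq> 0 \<longrightarrow> 0 < y \<bullet> (S *v y)"
    proof (intro allI impI)
      fix y :: "real^'n" assume y: "y \<noteq> 0"
      have "\<exists>u\<in>B. u \<bullet> y \<noteq> 0"
      proof (rule ccontr)
        assume "\<not> ?thesis"
        hence z: "\<forall>u\<in>B. u \<bullet> y = 0" by auto
        have "y = (\<Sum>u\<in>B. (u \<bullet> y) *\<^sub>R u)" by (rule expand)
        also have "\<dots> = 0" using z by simp
        finally have "y = 0" .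
        thus False using y by simp
      qed
      then obtain u where u: "u \<in> B" "u \<bullet> y \<noteq> 0" by blast
      have "0 < (\<Sum>u\<in>B. h u * (u \<bullet> y)\<^sup>2)"
        by (rule sum_pos2[OF fin u(1)]) (use u lpos in \<open>auto simp: h_def less_imp_le\<close>)
      thus "0 < y \<bullet> (S *v y)" by (simp add: Sv F_quad)
    qed
  qed
  ultimately show ?thesis by blast
qed

lemma trace_DXD:
  fixes D X :: "real^'n^'n"
  assumes "transpose D = D"
  shows "trace (D ** (X ** D)) = (\<Sum>i\<in>UNIV. column i D \<bullet> (X *v column i D))"
proof -
  have e: "D$i$k = D$k$i" for i k
    using arg_cong[OF assms, of "\<lambda>M. M$k$i"] by (simp add: transpose_def)
  show ?thesis
    unfolding trace_def matrix_matrix_mult_def column_def inner_vec_def matrix_vector_mult_def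
    by (simp add: e)
qed

lemma sqrt_unique:
  fixes S S' :: "real^'n^'n"
  assumes pS: "pos_def_mat S" and pS': "pos_def_mat S'" and eq: "S ** S = S' ** S'"
  shows "S = S'"
proof -
  define D where "D = S - S'"
  have sD: "transpose D = D" using pd_sym[OF pS] pd_sym[OF pS'] unfolding D_def
    by (simp add: transpose_def vec_eq_iff)
  have z: "S ** D + D ** S' = 0"
  proof -
    have "(S ** D + D ** S')$i$j = (S**S)$i$j - (S'**S')$i$j" for i j
      unfolding D_def matrix_matrix_mult_def
      by (simp add: right_diff_distrib left_diff_distrib sum_subtractf)
    thus ?thesis using eq by (simp add: vec_eq_iff)
  qed
  have "trace (D ** (S ** D)) + trace (D ** (D ** S')) = 0"
    using arg_cong[OF z, of "\<lambda>M. trace (D ** M)"]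
    by (simp add: matrix_add_ldistrib trace_add trace_def sum.distrib)
  moreover have "trace (D ** (D ** S')) = trace (D ** (S' ** D))"
  proof -
    have "trace (D ** (D ** S')) = trace ((D ** D) ** S')" by (simp add: matrix_mul_assoc)
    also have "\<dots> = trace (S' ** (D ** D))" by (rule trace_mul_sym)
    also have "\<dots> = trace ((S' ** D) ** D)" by (simp add: matrix_mul_assoc)
    also have "\<dots> = trace (D ** (S' ** D))" by (rule trace_mul_sym)
    finally show ?thesis .
  qed
  ultimately have "(\<Sum>i\<in>UNIV. column i D \<bullet> (S *v column i D) + column i D \<bullet> (S' *v column i D)) = 0"
    by (simp add: trace_DXD[OF sD] sum.distrib)
  moreover have "\<forall>i\<in>UNIV. 0 \<le> column i D \<bullet> (S *v column i D) + column i D \<bullet> (S' *v column i D)"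
    using pd_nonneg[OF pS] pd_nonneg[OF pS'] by (simp add: add_nonneg_nonneg)
  ultimately have "\<forall>i\<in>UNIV. column i D \<bullet> (S *v column i D) + column i D \<bullet> (S' *v column i D) = 0"
    by (simp add: sum_nonneg_eq_0_iff)
  hence c0: "column i D \<bullet> (S *v column i D) = 0" for i
  proof -
    assume h: "\<forall>i\<in>UNIV. column i D \<bullet> (S *v column i D) + column i D \<bullet> (S' *v column i D) = 0"
    have "column i D \<bullet> (S *v column i D) + column i D \<bullet> (S' *v column i D) = 0" using h by blast
    thus ?thesis using pd_nonneg[OF pS, of "column i D"] pd_nonneg[OF pS', of "column i D"] by linarith
  qed
  have c1: "column i D = 0" for i
  proof (rule ccontr)
    assume "column i D \<noteq> 0"
    hence "0 < column i D \<bullet> (S *v column i D)" using pS unfolding pos_def_mat_def by blast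
    thus False using c0[of i] by simp
  qed
  have "D = 0"
  proof -
    have "D$j$i = 0" for i j using arg_cong[OF c1[of i], of "\<lambda>v. v$j"] by (simp add: column_def)
    thus ?thesis by (simp add: vec_eq_iff)
  qed
  thus ?thesis unfolding D_def by simp
qed

lemma inv_sqrt_props:
  fixes V :: "real^'n^'n"
  assumes pd: "pos_def_mat V"
  shows "pos_def_mat (inv_sqrt_mat V) \<and> inv_sqrt_mat V ** inv_sqrt_mat V = matrix_inv V
         \<and> V ** matrix_inv V = mat 1"
proof -
  obtain S T where ST: "pos_def_mat S" "S ** S = T" "V ** T = mat 1"
    using inv_sqrt_exists[OF pd] by blast
  have TV: "T ** V = mat 1" using ST(3) matrix_left_right_inverse by blast
  have inv: "V ** matrix_inv V = mat 1 \<and> matrix_inv V ** V = mat 1"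
    unfolding matrix_inv_def by (rule someI[of _ T]) (use ST(3) TV in auto)
  have "matrix_inv V = matrix_inv V ** (V ** T)" using ST(3) by simp
  also have "\<dots> = (matrix_inv V ** V) ** T" by (rule matrix_mul_assoc)
  also have "\<dots> = T" using inv by simp
  finally have iT: "matrix_inv V = T" .
  have ex: "\<exists>!S. pos_def_mat S \<and> S ** S = matrix_inv V"
  proof (rule ex1I[of _ S])
    show "pos_def_mat S \<and> S ** S = matrix_inv V" using ST iT by simp
    fix S' assume "pos_def_mat S' \<and> S' ** S' = matrix_inv V"
    thus "S' = S" using sqrt_unique[of S' S] ST iT by simp
  qed
  have "pos_def_mat (inv_sqrt_mat V) \<and> inv_sqrt_mat V ** inv_sqrt_mat V = matrix_inv V"
    unfolding inv_sqrt_mat_def by (rule theI'[OF ex])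
  thus ?thesis using inv by blast
qed




lemma mat_mult_vec: "(mat k :: real^'n^'n) *v y = k *\<^sub>R y"
proof -
  have "(\<Sum>j\<in>UNIV. (if i = j then k else 0) * y $ j) = k * y $ i" for i
  proof -
    have "(\<Sum>j\<in>UNIV. (if i = j then k else 0) * y $ j) = (\<Sum>j\<in>UNIV. if i = j then k * y $ j else 0)"
      by (rule sum.cong) auto
    thus ?thesis by simp
  qed
  thus ?thesis by (simp add: vec_eq_iff matrix_vector_mult_def mat_def)
qed

lemma cs_V:
  fixes V :: "real^'n^'n"
  assumes sym: "transpose V = V" and nn: "\<And>y. 0 \<le> y \<bullet> (V *v y)"
  shows "(z \<bullet> (V *v u))\<^sup>2 \<le> (z \<bullet> (V *v z)) * (u \<bullet> (V *v u))"
proof -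
  define p where "p = z \<bullet> (V *v u)"
  define q where "q = z \<bullet> (V *v z)"
  define r where "r = u \<bullet> (V *v u)"
  have quad: "0 \<le> q + 2 * t * p + t\<^sup>2 * r" for t
  proof -
    have "u \<bullet> (V *v z) = p" unfolding p_def using sym_dot[OF sym, of u z] by (simp add: inner_commute)
    moreover have "0 \<le> (z + t *\<^sub>R u) \<bullet> (V *v (z + t *\<^sub>R u))" by (rule nn)
    ultimately show ?thesis unfolding p_def q_def r_def
      by (simp add: matrix_vector_right_distrib matrix_vector_mult_scaleR inner_add_left inner_add_right
          algebra_simps power2_eq_square)
  qed
  have r0: "0 \<le> r" "0 \<le> q" unfolding r_def q_def by (rule nn)+
  show ?thesis
  proof (cases "r = 0")
    case False
    hence r: "r > 0" using r0 by simp
    have "0 \<le> q + 2 * (-p/r) * p + (-p/r)\<^sup>2 * r" by (rule quad)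
    hence "0 \<le> q - p\<^sup>2 / r" using r by (simp add: power2_eq_square field_simps)
    hence "p\<^sup>2 \<le> q * r" using r by (simp add: field_simps)
    thus ?thesis unfolding p_def q_def r_def .
  next
    case True
    have "p = 0"
    proof (rule ccontr)
      assume p: "p \<noteq> 0"
      have "0 \<le> q + 2 * (-(q+1)/(2*p)) * p + (-(q+1)/(2*p))\<^sup>2 * r" by (rule quad)
      thus False using p True by (simp add: field_simps)
    qed
    thus ?thesis unfolding p_def q_def r_def using True r0 by (simp add: r_def)
  qed
qed

lemma loewner_bound:
  fixes V :: "real^'n^'n"
  assumes sym: "transpose V = V" and k: "k > 0"
    and lg: "\<And>y. y \<noteq> 0 \<Longrightarrow> 0 < y \<bullet> ((V - mat k) *v y)"
  shows "z \<bullet> (V *v z) \<le> (norm (V *v z))\<^sup>2 / k"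
proof (cases "z = 0")
  case True thus ?thesis by simp
next
  case False
  define q where "q = z \<bullet> (V *v z)"
  have "0 < z \<bullet> (V *v z) - k * (z \<bullet> z)" using lg[OF False]
    by (simp add: matrix_vector_mult_diff_rdistrib mat_mult_vec inner_diff_right)
  hence kq: "k * (norm z)\<^sup>2 < q" unfolding q_def by (simp add: dot_square_norm)
  have "\<bar>q\<bar> \<le> norm z * norm (V *v z)" unfolding q_def by (rule Cauchy_Schwarz_ineq2)
  hence "q\<^sup>2 \<le> (norm z)\<^sup>2 * (norm (V *v z))\<^sup>2"
    by (metis abs_ge_zero power2_abs power_mono power_mult_distrib)
  also have "\<dots> \<le> (q / k) * (norm (V *v z))\<^sup>2"
    using kq k by (intro mult_right_mono) (simp_all add: field_simps)
  finally have "q * q \<le> q * ((norm (V *v z))\<^sup>2 / k)" by (simp add: power2_eq_square field_simps)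
  moreover have "q > 0" using kq k False by (smt (verit) mult_pos_pos zero_less_power2 norm_eq_zero)
  ultimately have "q \<le> (norm (V *v z))\<^sup>2 / k" using mult_le_cancel_left_pos by blast
  thus ?thesis unfolding q_def .
qed

theorem lemmaE14:
  fixes M :: "'a measure"
    and eta :: "'a \<Rightarrow> real^'n"
    and x \<theta>star \<theta>check :: "real^'n"
    and V :: "real^'n^'n"
    and \<alpha> \<beta> \<pi>min \<pi>max \<pi>star :: real
    and m :: nat
  assumes "prob_space M"
    and "norm x \<le> 1"
    and "pos_def_mat V"
    and "\<alpha> > 0" and "m \<ge> 1"
    and "loewner_gt V (mat (\<alpha> * real m))"
    and "\<beta> > 0"
    and "eta \<in> borel_measurable M"
    and "integrable M eta"
    and "integral\<^sup>L M eta = 0"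
    and "integrable M (\<lambda>\<omega>. (norm (eta \<omega>))\<^sup>2)"
    and "integral\<^sup>L M (\<lambda>\<omega>. (norm (eta \<omega>))\<^sup>2) > 0"
    and "0 < \<pi>min" and "\<pi>min < \<pi>max" and "\<pi>max < 1"
    and "x \<bullet> \<theta>star > 0 \<Longrightarrow> \<pi>star = \<pi>min"
    and "x \<bullet> \<theta>star < 0 \<Longrightarrow> \<pi>star = \<pi>max"
    and "\<pi>min \<le> \<pi>star" and "\<pi>star \<le> \<pi>max"
  shows "let \<pi> = max \<pi>min (min \<pi>max
               (measure M {\<omega> \<in> space M.
                  x \<bullet> (\<theta>check + \<beta> *\<^sub>R (inv_sqrt_mat V *v eta \<omega>)) < 0}))
         in (\<pi> - \<pi>star) * (x \<bullet> \<theta>star) \<ge> 0 \<and>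
            (\<pi> - \<pi>star) * (x \<bullet> \<theta>star) <
              sqrt ((wnorm_sq V (\<theta>check - \<theta>star)
                     + \<beta>\<^sup>2 * integral\<^sup>L M (\<lambda>\<omega>. (norm (eta \<omega>))\<^sup>2))
                    / (min \<pi>min (1 - \<pi>max) * \<alpha> * real m))"
proof -
  interpret P: prob_space M by fact
  note [measurable] = assms(8)
  define S where "S = inv_sqrt_mat V"
  define T where "T = matrix_inv V"
  have pdS: "pos_def_mat S" and SS: "S ** S = T" and VT: "V ** T = mat 1"
    using inv_sqrt_props[OF assms(3)] unfolding S_def T_def by auto
  have symS: "transpose S = S" by (rule pd_sym[OF pdS])
  have symV: "transpose V = V" by (rule pd_sym[OF assms(3)])
  have nnV: "\<And>y. 0 \<le> y \<bullet> (V *v y)" by (rule pd_nonneg[OF assms(3)])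
  define k where "k = \<alpha> * real m"
  have k: "k > 0" unfolding k_def using assms(4,5) by simp
  define xs where "xs = S *v x"
  have xS: "x \<bullet> (S *v e) = xs \<bullet> e" for e unfolding xs_def by (rule sym_dot[OF symS])
  define z where "z = T *v x"
  have Vz: "V *v z = x" unfolding z_def by (simp add: matrix_vector_mul_assoc VT)
  define q where "q = z \<bullet> (V *v z)"
  have xsq: "xs \<bullet> xs = q"
  proof -
    have "xs \<bullet> xs = x \<bullet> (S *v xs)" using xS[of xs] by simp
    also have "\<dots> = x \<bullet> z" unfolding xs_def z_def by (simp add: matrix_vector_mul_assoc SS)
    also have "\<dots> = q" unfolding q_def Vz by (rule inner_commute)
    finally show ?thesis .
  qed
  have q0: "0 \<le> q" unfolding q_def by (rule nnV)
  have lg: "\<And>y. y \<noteq> 0 \<Longrightarrow> 0 < y \<bullet> ((V - mat k) *v y)"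
    using assms(6) unfolding loewner_gt_def pos_def_mat_def k_def by blast
  have qk: "q \<le> 1 / k"
  proof -
    have "q \<le> (norm x)\<^sup>2 / k" unfolding q_def using loewner_bound[OF symV k lg, of z] Vz by simp
    also have "\<dots> \<le> 1 / k" using assms(2) k
      by (intro divide_right_mono) (simp_all add: power_le_one)
    finally show ?thesis .
  qed
  define wn where "wn = wnorm_sq V (\<theta>check - \<theta>star)"
  have wn0: "0 \<le> wn" unfolding wn_def wnorm_sq_def by (rule nnV)
  define a where "a = x \<bullet> (\<theta>check - \<theta>star)"
  have a2: "a\<^sup>2 \<le> wn / k"
  proof -
    have "a = z \<bullet> (V *v (\<theta>check - \<theta>star))" unfolding a_def
      using sym_dot[OF symV, of z "\<theta>check - \<theta>star"] Vz by simp
    hence "a\<^sup>2 \<le> q * wn" unfolding q_def wn_def wnorm_sq_def using cs_V[OF symV nnV] by simp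
    also have "\<dots> \<le> (1/k) * wn" using qk wn0 by (rule mult_right_mono)
    finally show ?thesis by simp
  qed
  define E2 where "E2 = integral\<^sup>L M (\<lambda>\<omega>. (norm (eta \<omega>))\<^sup>2)"
  have E2: "E2 > 0" unfolding E2_def by (rule assms(12))
  define g where "g \<omega> = xs \<bullet> eta \<omega>" for \<omega>
  define Z where "Z \<omega> = a + \<beta> * g \<omega>" for \<omega>
  have gm[measurable]: "g \<in> borel_measurable M" unfolding g_def by measurable
  have Zm[measurable]: "Z \<in> borel_measurable M" unfolding Z_def by measurable
  have gi: "integrable M g" unfolding g_def using assms(9) by simp
  have g0: "integral\<^sup>L M g = 0" unfolding g_def using assms(9,10) by simp
  have gb: "(g \<omega>)\<^sup>2 \<le> q * (norm (eta \<omega>))\<^sup>2" for \<omega>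
  proof -
    have "\<bar>g \<omega>\<bar> \<le> norm xs * norm (eta \<omega>)" unfolding g_def by (rule Cauchy_Schwarz_ineq2)
    hence "(g \<omega>)\<^sup>2 \<le> (norm xs * norm (eta \<omega>))\<^sup>2"
      by (metis abs_ge_zero power2_abs power_mono)
    also have "\<dots> = q * (norm (eta \<omega>))\<^sup>2" using xsq by (simp add: power_mult_distrib dot_square_norm)
    finally show ?thesis .
  qed
  have bi: "integrable M (\<lambda>\<omega>. q * (norm (eta \<omega>))\<^sup>2)" using assms(11) by simp
  have g2i: "integrable M (\<lambda>\<omega>. (g \<omega>)\<^sup>2)"
    by (rule Bochner_Integration.integrable_bound[OF bi]) (use gb q0 in \<open>auto intro!: AE_I2\<close>)
  have Eg2: "integral\<^sup>L M (\<lambda>\<omega>. (g \<omega>)\<^sup>2) \<le> q * E2"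
    unfolding E2_def using integral_mono[OF g2i bi gb] by simp
  have Zexp: "(\<lambda>\<omega>. (Z \<omega>)\<^sup>2) = (\<lambda>\<omega>. a\<^sup>2 + (2 * a * \<beta>) * g \<omega> + \<beta>\<^sup>2 * (g \<omega>)\<^sup>2)"
    unfolding Z_def by (auto simp: power2_eq_square algebra_simps)
  have Z2i: "integrable M (\<lambda>\<omega>. (Z \<omega>)\<^sup>2)" unfolding Zexp using gi g2i by simp
  have EZ: "integral\<^sup>L M (\<lambda>\<omega>. (Z \<omega>)\<^sup>2) = a\<^sup>2 + \<beta>\<^sup>2 * integral\<^sup>L M (\<lambda>\<omega>. (g \<omega>)\<^sup>2)"
    unfolding Zexp using gi g2i g0 by (simp add: P.prob_space)
  define W where "W = wn + \<beta>\<^sup>2 * E2"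
  have W0: "W > 0" unfolding W_def using wn0 E2 assms(7) by (simp add: add_nonneg_pos)
  have EZW: "integral\<^sup>L M (\<lambda>\<omega>. (Z \<omega>)\<^sup>2) \<le> W / k"
  proof -
    have "\<beta>\<^sup>2 * integral\<^sup>L M (\<lambda>\<omega>. (g \<omega>)\<^sup>2) \<le> \<beta>\<^sup>2 * (q * E2)" using Eg2 by (simp add: mult_left_mono)
    also have "\<dots> \<le> \<beta>\<^sup>2 * ((1/k) * E2)" using qk E2 by (intro mult_left_mono mult_right_mono) auto
    finally show ?thesis using EZ a2 unfolding W_def by (simp add: add_divide_distrib)
  qed
  have markov: "measure M A * d\<^sup>2 \<le> W / k" if "d \<noteq> 0" "A \<subseteq> {\<omega>\<in>space M. d\<^sup>2 \<le> (Z \<omega>)\<^sup>2}" for A d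
  proof -
    have d2: "d\<^sup>2 > 0" using that(1) by simp
    have "measure M A \<le> measure M {\<omega>\<in>space M. d\<^sup>2 \<le> (Z \<omega>)\<^sup>2}"
      by (rule P.finite_measure_mono[OF that(2)]) measurable
    also have "\<dots> \<le> integral\<^sup>L M (\<lambda>\<omega>. (Z \<omega>)\<^sup>2) / d\<^sup>2"
      by (rule integral_Markov_inequality_measure[OF Z2i _ _ d2]) auto
    finally have "measure M A * d\<^sup>2 \<le> integral\<^sup>L M (\<lambda>\<omega>. (Z \<omega>)\<^sup>2)"
      using d2 by (simp add: field_simps)
    thus ?thesis using EZW by linarith
  qed
  define c where "c = x \<bullet> \<theta>star"
  have iden: "x \<bullet> (\<theta>check + \<beta> *\<^sub>R (inv_sqrt_mat V *v eta \<omega>)) = c + Z \<omega>" for \<omega>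
    unfolding c_def Z_def a_def g_def S_def[symmetric]
    by (simp add: inner_add_right matrix_vector_mult_scaleR xS inner_diff_right)
  define Pr where "Pr = measure M {\<omega> \<in> space M. x \<bullet> (\<theta>check + \<beta> *\<^sub>R (inv_sqrt_mat V *v eta \<omega>)) < 0}"
  have Pr: "Pr = measure M {\<omega> \<in> space M. c + Z \<omega> < 0}" unfolding Pr_def iden ..
  define \<pi> where "\<pi> = max \<pi>min (min \<pi>max Pr)"
  define R where "R = W / (min \<pi>min (1 - \<pi>max) * \<alpha> * real m)"
  have R: "R = W / (min \<pi>min (1 - \<pi>max) * k)" unfolding R_def k_def by (simp add: mult.assoc)
  have mpos: "min \<pi>min (1 - \<pi>max) > 0" using assms(13,15) by simp
  have Rpos: "R > 0" unfolding R using W0 mpos k by simp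
  have pib: "\<pi>min \<le> \<pi>" "\<pi> \<le> \<pi>max" unfolding \<pi>_def using assms(14) by auto
  have main: "0 \<le> (\<pi> - \<pi>star) * c \<and> (\<pi> - \<pi>star) * c < sqrt R"
  proof (cases "c > 0")
    case cpos: True
    hence ps: "\<pi>star = \<pi>min" using assms(16) unfolding c_def by blast
    show ?thesis
    proof (cases "Pr \<le> \<pi>min")
      case True
      hence "\<pi> = \<pi>min" unfolding \<pi>_def using assms(14) by auto
      thus ?thesis using ps Rpos by simp
    next
      case False
      have "{\<omega> \<in> space M. c + Z \<omega> < 0} \<subseteq> {\<omega>\<in>space M. c\<^sup>2 \<le> (Z \<omega>)\<^sup>2}"
      proof (clarify)
        fix \<omega> assume "\<omega> \<in> space M" "c + Z \<omega> < 0"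
        hence "c \<le> \<bar>Z \<omega>\<bar>" by simp
        thus "c\<^sup>2 \<le> (Z \<omega>)\<^sup>2" using cpos by (metis abs_of_pos power2_abs power_mono less_imp_le)
      qed
      from markov[OF _ this] cpos have "Pr * c\<^sup>2 \<le> W / k" unfolding Pr by simp
      moreover have "\<pi>min * c\<^sup>2 < Pr * c\<^sup>2" using False cpos by simp
      ultimately have "\<pi>min * c\<^sup>2 < W / k" by linarith
      hence c2: "c\<^sup>2 < W / (\<pi>min * k)" using assms(13) k by (simp add: field_simps)
      have "W / (\<pi>min * k) \<le> R" unfolding R using W0 mpos k
        by (intro divide_left_mono mult_right_mono) auto
      with c2 have cR: "c\<^sup>2 < R" by linarith
      have d: "0 \<le> \<pi> - \<pi>star" "\<pi> - \<pi>star \<le> 1" using ps pib assms(13,15) by auto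
      have "((\<pi> - \<pi>star) * c)\<^sup>2 \<le> c\<^sup>2" using d cpos
        by (simp add: power_mult_distrib mult_le_cancel_right1 power_le_one)
      hence "((\<pi> - \<pi>star) * c)\<^sup>2 < R" using cR by linarith
      thus ?thesis using d cpos by (simp add: real_less_rsqrt)
    qed
  next
    case cnp: False
    show ?thesis
    proof (cases "c < 0")
      case cneg: True
      hence ps: "\<pi>star = \<pi>max" using assms(17) unfolding c_def by blast
      show ?thesis
      proof (cases "\<pi>max \<le> Pr")
        case True
        hence "\<pi> = \<pi>max" unfolding \<pi>_def using assms(14) by auto
        thus ?thesis using ps Rpos by simp
      next
        case False
        have ev: "{\<omega> \<in> space M. c + Z \<omega> < 0} \<in> sets M" by measurable
        have "space M - {\<omega> \<in> space M. c + Z \<omega> < 0} = {\<omega> \<in> space M. \<not> c + Z \<omega> < 0}" by auto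
        hence cm: "measure M {\<omega> \<in> space M. \<not> c + Z \<omega> < 0} = 1 - Pr"
          using P.prob_compl[OF ev] unfolding Pr by simp
        have "{\<omega> \<in> space M. \<not> c + Z \<omega> < 0} \<subseteq> {\<omega>\<in>space M. c\<^sup>2 \<le> (Z \<omega>)\<^sup>2}"
        proof (clarify)
          fix \<omega> assume "\<omega> \<in> space M" "\<not> c + Z \<omega> < 0"
          hence "-c \<le> \<bar>Z \<omega>\<bar>" by simp
          hence "(-c)\<^sup>2 \<le> (Z \<omega>)\<^sup>2" using cneg by (metis abs_of_pos power2_abs power_mono neg_0_less_iff_less less_imp_le)
          thus "c\<^sup>2 \<le> (Z \<omega>)\<^sup>2" by simp
        qed
        from markov[OF _ this] cneg cm have "(1 - Pr) * c\<^sup>2 \<le> W / k" by simp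
        moreover have "(1 - \<pi>max) * c\<^sup>2 < (1 - Pr) * c\<^sup>2" using False cneg by simp
        ultimately have "(1 - \<pi>max) * c\<^sup>2 < W / k" by linarith
        hence c2: "c\<^sup>2 < W / ((1 - \<pi>max) * k)" using assms(15) k by (simp add: field_simps)
        have "W / ((1 - \<pi>max) * k) \<le> R" unfolding R using W0 mpos k
          by (intro divide_left_mono mult_right_mono) auto
        with c2 have cR: "c\<^sup>2 < R" by linarith
        have d: "\<pi> - \<pi>star \<le> 0" "\<pi>star - \<pi> \<le> 1" using ps pib assms(13,15) by auto
        have e: "(\<pi> - \<pi>star) * c = (\<pi>star - \<pi>) * (-c)" by (simp add: algebra_simps)
        have "((\<pi>star - \<pi>) * (-c))\<^sup>2 \<le> (-c)\<^sup>2" using d cneg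
          by (simp add: power_mult_distrib mult_le_cancel_right1 power_le_one)
        hence "((\<pi> - \<pi>star) * c)\<^sup>2 < R" using cR e by simp
        moreover have "0 \<le> (\<pi> - \<pi>star) * c" using d cneg by (simp add: mult_nonpos_nonpos)
        ultimately show ?thesis by (simp add: real_less_rsqrt)
      qed
    next
      case False
      hence "c = 0" using cnp by simp
      thus ?thesis using Rpos by simp
    qed
  qed
  show ?thesis
    unfolding Let_def Pr_def[symmetric] \<pi>_def[symmetric] c_def[symmetric]
      wn_def[symmetric] E2_def[symmetric] W_def[symmetric] R_def[symmetric]
    using main .
qed


end
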